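(* Let $X$ be a finite multiset of nonzero real numbers and let $T_{\min}$ be an addition tree over $X$ of minimum cost. Let $z$ be an internal node of $T_{\min}$ that is not the root, with children $z_1$ and $z_2$, sibling $u$, and parent $r$ (identifying each node with its value). (1) If $z>0$, $z_1\ge 0$ and $z_2>0$, then $u\ge 0$ or $r<0$. (2) If $z<0$, $z_1\le 0$ and $z_2<0$, then $u\le 0$ or $r>0$.
   Context: An addition tree over a multiset $X=\{x_1,\dots,x_n\}$ is a full binary tree with $n$ leaves labeled by the elements of $X$ (each element used exactly once), where every internal node has as its value the sum of the values of its two children. If $I_1,\dots,I_{n-1}$ are the values of the internal nodes of $T$, the cost of $T$ is $C(T)=\sum_{i=1}^{n-1}|I_i|$. $T_{\min}$ denotes an addition tree over $X$ minimizing $C$. *)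

theory Defs
  imports Complex_Main "HOL-Library.Multiset"
begin

datatype atree = Leaf real | Node atree atree

fun val :: "atree \<Rightarrow> real" where
  "val (Leaf x) = x"
| "val (Node l r) = val l + val r"

fun leaves :: "atree \<Rightarrow> real multiset" where
  "leaves (Leaf x) = {#x#}"
| "leaves (Node l r) = leaves l + leaves r"

fun cost :: "atree \<Rightarrow> real" where
  "cost (Leaf x) = 0"
| "cost (Node l r) = \<bar>val l + val r\<bar> + cost l + cost r"

fun subtrees :: "atree \<Rightarrow> atree set" where
  "subtrees (Leaf x) = {Leaf x}"
| "subtrees (Node l r) = insert (Node l r) (subtrees l \<union> subtrees r)"

definition addition_tree :: "real multiset \<Rightarrow> atree \<Rightarrow> bool" where
  "addition_tree X T \<longleftrightarrow> leaves T = X"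

definition min_addition_tree :: "real multiset \<Rightarrow> atree \<Rightarrow> bool" where
  "min_addition_tree X T \<longleftrightarrow> addition_tree X T \<and>
     (\<forall>T'. addition_tree X T' \<longrightarrow> cost T \<le> cost T')"

end

theory Submission
  imports Defs
begin

lemma replace_sub:
  assumes "S \<in> subtrees T" "leaves S' = leaves S" "val S' = val S" "cost S' < cost S"
  shows "\<exists>T'. leaves T' = leaves T \<and> val T' = val T \<and> cost T' < cost T"
  using assms(1)
proof (induction T)
  case (Leaf x)
  then show ?case using assms by auto
next
  case (Node l r)
  show ?case
  proof (cases "S = Node l r")
    case True
    then show ?thesis using assms by blast
  next
    case False
    then have "S \<in> subtrees l \<or> S \<in> subtrees r" using Node.prems by auto
    then show ?thesis
    proof
      assume "S \<in> subtrees l"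
      then obtain l' where "leaves l' = leaves l" "val l' = val l" "cost l' < cost l"
        using Node.IH by blast
      then show ?thesis by (intro exI[of _ "Node l' r"]) auto
    next
      assume "S \<in> subtrees r"
      then obtain r' where "leaves r' = leaves r" "val r' = val r" "cost r' < cost r"
        using Node.IH by blast
      then show ?thesis by (intro exI[of _ "Node l r'"]) auto
    qed
  qed
qed

theorem lemma2p1:
  fixes X :: "real multiset" and T z z1 z2 u :: atree
  assumes nonzero: "\<forall>x\<in>#X. x \<noteq> 0"
    and min: "min_addition_tree X T"
    and children: "z = Node z1 z2 \<or> z = Node z2 z1"
    and parent: "Node z u \<in> subtrees T \<or> Node u z \<in> subtrees T"
  shows "(val z > 0 \<and> val z1 \<ge> 0 \<and> val z2 > 0 \<longrightarrow>
            val u \<ge> 0 \<or> val z + val u < 0)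
       \<and> (val z < 0 \<and> val z1 \<le> 0 \<and> val z2 < 0 \<longrightarrow>
            val u \<le> 0 \<or> val z + val u > 0)"
proof -
  obtain S where S: "S \<in> subtrees T" "S = Node z u \<or> S = Node u z" using parent by blast
  define S' where "S' = Node (Node z2 u) z1"
  have lv: "leaves S' = leaves S" using S(2) children by (auto simp: S'_def)
  have vv: "val S' = val S" using S(2) children by (auto simp: S'_def)
  have cS: "cost S = \<bar>val z1 + val z2 + val u\<bar> + \<bar>val z1 + val z2\<bar> + cost z1 + cost z2 + cost u"
    using S(2) children by (auto simp: algebra_simps)
  have cS': "cost S' = \<bar>val z1 + val z2 + val u\<bar> + \<bar>val z2 + val u\<bar> + cost z1 + cost z2 + cost u"
    by (simp add: S'_def algebra_simps)
  have vz: "val z = val z1 + val z2" using children by auto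
  have nolt: "\<not> cost S' < cost S"
  proof
    assume "cost S' < cost S"
    then obtain T' where "leaves T' = leaves T" "cost T' < cost T"
      using replace_sub[OF S(1) lv vv] by blast
    then show False using min unfolding min_addition_tree_def addition_tree_def by force
  qed
  show ?thesis
  proof (intro conjI impI)
    assume h: "0 < val z \<and> 0 \<le> val z1 \<and> 0 < val z2"
    show "val u \<ge> 0 \<or> val z + val u < 0"
    proof (rule ccontr)
      assume "\<not> ?thesis"
      then have "cost S' < cost S" using h vz cS cS' by (simp add: abs_if split: if_splits)
      then show False using nolt by blast
    qed
  next
    assume h: "val z < 0 \<and> val z1 \<le> 0 \<and> val z2 < 0"
    show "val u \<le> 0 \<or> val z + val u > 0"
    proof (rule ccontr)
      assume "\<not> ?thesis"
      then have "cost S' < cost S" using h vz cS cS' by (simp add: abs_if split: if_splits)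
      then show False using nolt by blast
    qed
  qed
qed

end
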